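(* The canonical model $\mathcal M_c=(|\mathcal M_c|,\preccurlyeq_c,S_c,\ell_c)$ is a deterministic weak $\mathcal L_\Diamond$-quasimodel.
   Context: $\mathcal L_\Diamond$ is the propositional language with $\bot,\wedge,\vee,\to$ and unary modalities $\bigcirc$, $\Diamond$. ${\sf ITL}^0_\Diamond$ is the logic axiomatized by all intuitionistic propositional tautologies, $\neg\bigcirc\bot$, $\bigcirc\varphi\wedge\bigcirc\psi\to\bigcirc(\varphi\wedge\psi)$, $\bigcirc(\varphi\vee\psi)\to\bigcirc\varphi\vee\bigcirc\psi$, $\bigcirc(\varphi\to\psi)\to(\bigcirc\varphi\to\bigcirc\psi)$, $\varphi\vee\bigcirc\Diamond\varphi\to\Diamond\varphi$, closed under modus ponens and the rules $\varphi/\bigcirc\varphi$, $(\varphi\to\psi)/(\Diamond\varphi\to\Diamond\psi)$, $(\bigcirc\varphi\to\varphi)/(\Diamond\varphi\to\varphi)$. $\Gamma\vdash\Delta$ means ${\sf ITL}^0_\Diamond\vdash\bigwedge\Gamma'\to\bigvee\Delta'$ for some finite $\Gamma'\subseteq\Gamma$, $\Delta'\subseteq\Delta$. A prime type is a pair $\Phi=(\Phi^-,\Phi^+)$ of sets of formulas with $\Phi^-\cup\Phi^+=\mathcal L_\Diamond$ and $\Phi^+\not\vdash\Phi^-$. For $\Sigma$ closed under subformulas, a $\Sigma$-type is a pair $\Phi=(\Phi^-;\Phi^+)$ of subsets of $\Sigma$ with: $\Phi^-\cap\Phi^+=\varnothing$; $\Phi^-\cup\Phi^+=\Sigma$; $\bot\notin\Phi^+$;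 $\varphi\wedge\psi\in\Phi^+$ iff $\varphi,\psi\in\Phi^+$; $\varphi\vee\psi\in\Phi^+$ iff $\varphi\in\Phi^+$ or $\psi\in\Phi^+$; if $\varphi\to\psi\in\Phi^+$ then $\varphi\in\Phi^-$ or $\psi\in\Phi^+$; if $\Diamond\varphi\in\Phi^-$ then $\varphi\in\Phi^-$. $\Phi\preccurlyeq_T\Psi$ iff $\Phi^+\subseteq\Psi^+$. $\Phi\,S_T\,\Psi$ iff for all $\varphi$: $\bigcirc\varphi\in\Phi^+\Rightarrow\varphi\in\Psi^+$; $\bigcirc\varphi\in\Phi^-\Rightarrow\varphi\in\Psi^-$; ($\Diamond\varphi\in\Phi^+$ and $\varphi\in\Phi^-$) $\Rightarrow\Diamond\varphi\in\Psi^+$; $\Diamond\varphi\in\Phi^-\Rightarrow\Diamond\varphi\in\Psi^-$. A $\Sigma$-labelled frame is $(W,\preccurlyeq,\ell)$ with $\preccurlyeq$ a partial order, $\ell$ mapping $W$ to $\Sigma$-types, $w\preccurlyeq v\Rightarrow\ell(w)\preccurlyeq_T\ell(v)$, and whenever $\varphi\to\psi\in\ell^-(w)$ there is $v\succcurlyeq w$ with $\varphi\in\ell^+(v)$, $\psi\in\ell^-(v)$. A weak $\Sigma$-quasimodel is $(W,\preccurlyeq,S,\ell)$ with $(W,\preccurlyeq,\ell)$ a $\Sigma$-labelled frame and $S\subseteq W\times W$ forward-confluent (if $w\preccurlyeq w'$ and $w\,S\,v$ then some $v'\succcurlyeq v$ has $w'\,S\,v'$) and sensible ($w\,S\,v\Rightarrow\ell(w)\,S_T\,\ell(v)$);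 it is deterministic if $S$ is a function. The canonical model $\mathcal M_c$: domain the set of prime types, $\preccurlyeq_c$ is $\preccurlyeq_T$ restricted to prime types, $S_c$ is $S_T$ restricted to prime types, $\ell_c$ is the identity. *)

theory Defs
  imports Main
begin

datatype fm =
    Var nat
  | Bot
  | And fm fm
  | Or fm fm
  | Imp fm fm
  | Next fm
  | Dia fm

definition Top :: fm where "Top = Imp Bot Bot"

text \<open>Intuitionistic propositional tautologies are generated by a standard complete
Hilbert axiomatisation of IPC (all schemata instantiated over L_Diamond) together with
modus ponens.\<close>

inductive prov :: "fm \<Rightarrow> bool" where
  ax_k: "prov (Imp p (Imp q p))"
| ax_s: "prov (Imp (Imp p (Imp q r)) (Imp (Imp p q) (Imp p r)))"
| ax_and1: "prov (Imp (And p q) p)"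
| ax_and2: "prov (Imp (And p q) q)"
| ax_andI: "prov (Imp p (Imp q (And p q)))"
| ax_or1: "prov (Imp p (Or p q))"
| ax_or2: "prov (Imp q (Or p q))"
| ax_orE: "prov (Imp (Imp p r) (Imp (Imp q r) (Imp (Or p q) r)))"
| ax_efq: "prov (Imp Bot p)"
| ax_nnext: "prov (Imp (Next Bot) Bot)"
| ax_next_and: "prov (Imp (And (Next p) (Next q)) (Next (And p q)))"
| ax_next_or: "prov (Imp (Next (Or p q)) (Or (Next p) (Next q)))"
| ax_next_imp: "prov (Imp (Next (Imp p q)) (Imp (Next p) (Next q)))"
| ax_dia_fix: "prov (Imp (Or p (Next (Dia p))) (Dia p))"
| mp: "prov (Imp p q) \<Longrightarrow> prov p \<Longrightarrow> prov q"
| nec: "prov p \<Longrightarrow> prov (Next p)"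
| dia_mono: "prov (Imp p q) \<Longrightarrow> prov (Imp (Dia p) (Dia q))"
| dia_ind: "prov (Imp (Next p) p) \<Longrightarrow> prov (Imp (Dia p) p)"

fun Conj :: "fm list \<Rightarrow> fm" where
  "Conj [] = Top"
| "Conj (p # ps) = And p (Conj ps)"

fun Disj :: "fm list \<Rightarrow> fm" where
  "Disj [] = Bot"
| "Disj (p # ps) = Or p (Disj ps)"

definition derives :: "fm set \<Rightarrow> fm set \<Rightarrow> bool" where
  "derives \<Gamma> \<Delta> \<longleftrightarrow>
     (\<exists>xs ys. set xs \<subseteq> \<Gamma> \<and> set ys \<subseteq> \<Delta> \<and> prov (Imp (Conj xs) (Disj ys)))"

type_synonym ftype = "fm set \<times> fm set"

abbreviation tminus :: "ftype \<Rightarrow> fm set" where "tminus \<Phi> \<equiv> fst \<Phi>"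
abbreviation tplus :: "ftype \<Rightarrow> fm set" where "tplus \<Phi> \<equiv> snd \<Phi>"

definition prime_type :: "ftype \<Rightarrow> bool" where
  "prime_type \<Phi> \<longleftrightarrow> tminus \<Phi> \<union> tplus \<Phi> = UNIV \<and> \<not> derives (tplus \<Phi>) (tminus \<Phi>)"

definition is_type :: "fm set \<Rightarrow> ftype \<Rightarrow> bool" where
  "is_type \<Sigma> \<Phi> \<longleftrightarrow>
     tminus \<Phi> \<subseteq> \<Sigma> \<and> tplus \<Phi> \<subseteq> \<Sigma> \<and>
     tminus \<Phi> \<inter> tplus \<Phi> = {} \<and>
     tminus \<Phi> \<union> tplus \<Phi> = \<Sigma> \<and>
     Bot \<notin> tplus \<Phi> \<and>
     (\<forall>p q. And p q \<in> \<Sigma> \<longrightarrow> (And p q \<in> tplus \<Phi> \<longleftrightarrow> p \<in> tplus \<Phi> \<and> q \<in> tplus \<Phi>)) \<and>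
     (\<forall>p q. Or p q \<in> \<Sigma> \<longrightarrow> (Or p q \<in> tplus \<Phi> \<longleftrightarrow> p \<in> tplus \<Phi> \<or> q \<in> tplus \<Phi>)) \<and>
     (\<forall>p q. Imp p q \<in> tplus \<Phi> \<longrightarrow> p \<in> tminus \<Phi> \<or> q \<in> tplus \<Phi>) \<and>
     (\<forall>p. Dia p \<in> tminus \<Phi> \<longrightarrow> p \<in> tminus \<Phi>)"

definition type_le :: "ftype \<Rightarrow> ftype \<Rightarrow> bool" where
  "type_le \<Phi> \<Psi> \<longleftrightarrow> tplus \<Phi> \<subseteq> tplus \<Psi>"

definition type_S :: "ftype \<Rightarrow> ftype \<Rightarrow> bool" where
  "type_S \<Phi> \<Psi> \<longleftrightarrow>
     (\<forall>p. Next p \<in> tplus \<Phi> \<longrightarrow> p \<in> tplus \<Psi>) \<and>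
     (\<forall>p. Next p \<in> tminus \<Phi> \<longrightarrow> p \<in> tminus \<Psi>) \<and>
     (\<forall>p. Dia p \<in> tplus \<Phi> \<and> p \<in> tminus \<Phi> \<longrightarrow> Dia p \<in> tplus \<Psi>) \<and>
     (\<forall>p. Dia p \<in> tminus \<Phi> \<longrightarrow> Dia p \<in> tminus \<Psi>)"

definition partial_order_on' :: "'w set \<Rightarrow> ('w \<Rightarrow> 'w \<Rightarrow> bool) \<Rightarrow> bool" where
  "partial_order_on' W le \<longleftrightarrow>
     (\<forall>w\<in>W. le w w) \<and>
     (\<forall>u\<in>W. \<forall>v\<in>W. \<forall>w\<in>W. le u v \<longrightarrow> le v w \<longrightarrow> le u w) \<and>
     (\<forall>u\<in>W. \<forall>v\<in>W. le u v \<longrightarrow> le v u \<longrightarrow> u = v)"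

definition labelled_frame ::
  "fm set \<Rightarrow> 'w set \<Rightarrow> ('w \<Rightarrow> 'w \<Rightarrow> bool) \<Rightarrow> ('w \<Rightarrow> ftype) \<Rightarrow> bool" where
  "labelled_frame \<Sigma> W le lab \<longleftrightarrow>
     partial_order_on' W le \<and>
     (\<forall>w\<in>W. is_type \<Sigma> (lab w)) \<and>
     (\<forall>w\<in>W. \<forall>v\<in>W. le w v \<longrightarrow> type_le (lab w) (lab v)) \<and>
     (\<forall>w\<in>W. \<forall>p q. Imp p q \<in> tminus (lab w) \<longrightarrow>
        (\<exists>v\<in>W. le w v \<and> p \<in> tplus (lab v) \<and> q \<in> tminus (lab v)))"

definition forward_confluent ::
  "'w set \<Rightarrow> ('w \<Rightarrow> 'w \<Rightarrow> bool) \<Rightarrow> ('w \<Rightarrow> 'w \<Rightarrow> bool) \<Rightarrow> bool" where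
  "forward_confluent W le S \<longleftrightarrow>
     (\<forall>w\<in>W. \<forall>w'\<in>W. \<forall>v\<in>W. le w w' \<and> S w v \<longrightarrow> (\<exists>v'\<in>W. le v v' \<and> S w' v'))"

definition sensible :: "'w set \<Rightarrow> ('w \<Rightarrow> 'w \<Rightarrow> bool) \<Rightarrow> ('w \<Rightarrow> ftype) \<Rightarrow> bool" where
  "sensible W S lab \<longleftrightarrow> (\<forall>w\<in>W. \<forall>v\<in>W. S w v \<longrightarrow> type_S (lab w) (lab v))"

definition weak_quasimodel ::
  "fm set \<Rightarrow> 'w set \<Rightarrow> ('w \<Rightarrow> 'w \<Rightarrow> bool) \<Rightarrow> ('w \<Rightarrow> 'w \<Rightarrow> bool) \<Rightarrow> ('w \<Rightarrow> ftype) \<Rightarrow> bool" where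
  "weak_quasimodel \<Sigma> W le S lab \<longleftrightarrow>
     labelled_frame \<Sigma> W le lab \<and> forward_confluent W le S \<and> sensible W S lab"

definition deterministic :: "'w set \<Rightarrow> ('w \<Rightarrow> 'w \<Rightarrow> bool) \<Rightarrow> bool" where
  "deterministic W S \<longleftrightarrow> (\<forall>w\<in>W. \<exists>!v. v \<in> W \<and> S w v)"

definition Wc :: "ftype set" where "Wc = {\<Phi>. prime_type \<Phi>}"
definition le_c :: "ftype \<Rightarrow> ftype \<Rightarrow> bool" where "le_c = type_le"
definition S_c :: "ftype \<Rightarrow> ftype \<Rightarrow> bool" where "S_c = type_S"
definition l_c :: "ftype \<Rightarrow> ftype" where "l_c = id"

end

theory Submission imports Defs begin

inductive Th :: "fm set \<Rightarrow> fm \<Rightarrow> bool" for G where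
  hyp: "p \<in> G \<Longrightarrow> Th G p"
| thmI: "prov p \<Longrightarrow> Th G p"
| tmp: "Th G (Imp p q) \<Longrightarrow> Th G p \<Longrightarrow> Th G q"

lemma prov_I: "prov (Imp p p)"
  using prov.mp[OF prov.mp[OF prov.ax_s[of p "Imp p p" p] prov.ax_k[of p "Imp p p"]] prov.ax_k[of p p]] .

lemma Th_mono: "Th G p \<Longrightarrow> G \<subseteq> H \<Longrightarrow> Th H p"
proof (induction rule: Th.induct)
  case (hyp p) then show ?case by (auto intro: Th.hyp)
next
  case (thmI p) then show ?case by (simp add: Th.thmI)
next
  case (tmp p q) then show ?case by (meson Th.tmp)
qed

lemma Th_deduct: "Th (insert a G) q \<Longrightarrow> Th G (Imp a q)"
proof (induction rule: Th.induct)
  case (hyp p)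
  then show ?case
  proof (cases "p = a")
    case True then show ?thesis by (simp add: Th.thmI prov_I)
  next
    case False then have "Th G p" using hyp by (auto intro: Th.hyp)
    then show ?thesis by (meson Th.thmI Th.tmp prov.ax_k)
  qed
next
  case (thmI p)
  then show ?case by (meson Th.thmI Th.tmp prov.ax_k)
next
  case (tmp p q)
  then show ?case by (meson Th.thmI Th.tmp prov.ax_s)
qed

lemma Th_empty: "Th {} p \<Longrightarrow> prov p"
  by (induction rule: Th.induct) (auto intro: prov.mp)

lemma Th_finite: "Th G p \<Longrightarrow> \<exists>xs. set xs \<subseteq> G \<and> Th (set xs) p"
proof (induction rule: Th.induct)
  case (hyp p)
  then show ?case by (rule_tac x="[p]" in exI) (auto intro: Th.hyp)
next
  case (thmI p)
  then show ?case by (rule_tac x="[]" in exI) (auto intro: Th.thmI)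
next
  case (tmp p q)
  then obtain xs ys where "set xs \<subseteq> G" "Th (set xs) (Imp p q)" "set ys \<subseteq> G" "Th (set ys) p" by blast
  then show ?case
  proof (rule_tac x="xs@ys" in exI, intro conjI)
    show "Th (set (xs @ ys)) q"
      by (rule Th.tmp[of _ p]) (auto intro: Th_mono[OF \<open>Th (set xs) (Imp p q)\<close>] Th_mono[OF \<open>Th (set ys) p\<close>])
  qed (use \<open>set xs \<subseteq> G\<close> \<open>set ys \<subseteq> G\<close> in auto)
qed

lemma Th_mp: "Th G (Imp a b) \<Longrightarrow> Th G a \<Longrightarrow> Th G b" by (rule Th.tmp)
lemma Th_ax: "prov (Imp a b) \<Longrightarrow> Th G a \<Longrightarrow> Th G b" by (meson Th.thmI Th.tmp)

lemma prov_Top: "prov Top" unfolding Top_def by (rule prov.ax_efq)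

lemma Th_Conj_self: "Th (set xs) (Conj xs)"
proof (induction xs)
  case Nil
  then show ?case by (simp add: Th.thmI prov_Top)
next
  case (Cons x xs)
  have "Th (set (x#xs)) (Conj xs)" using Th_mono[OF Cons] by (simp add: subset_insertI)
  moreover have "Th (set (x#xs)) x" by (simp add: Th.hyp)
  ultimately show ?case using Th_mp[OF Th_ax[OF prov.ax_andI]] by simp
qed

lemma Th_list_prov: "Th (set xs) p \<Longrightarrow> prov (Imp (Conj xs) p)"
proof (induction xs arbitrary: p)
  case Nil
  then have "prov p" using Th_empty by simp
  then show ?case using prov.mp[OF prov.ax_k] by simp
next
  case (Cons x xs)
  then have "Th (set xs) (Imp x p)" using Th_deduct[of x "set xs" p] by simp
  then have 1: "prov (Imp (Conj xs) (Imp x p))" using Cons by blast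
  have "Th {And x (Conj xs)} p"
  proof -
    have h: "Th {And x (Conj xs)} (And x (Conj xs))" by (simp add: Th.hyp)
    have "Th {And x (Conj xs)} x" using h Th_ax prov.ax_and1 by blast
    moreover have "Th {And x (Conj xs)} (Conj xs)" using h Th_ax prov.ax_and2 by blast
    ultimately show ?thesis using Th_mp[OF Th_mp[OF Th.thmI[OF 1]]] by blast
  qed
  then show ?case using Th_deduct[of "And x (Conj xs)" "{}" p] Th_empty by simp
qed

lemma Th_iff: "Th G p \<longleftrightarrow> (\<exists>xs. set xs \<subseteq> G \<and> prov (Imp (Conj xs) p))"
proof
  assume "Th G p"
  then show "\<exists>xs. set xs \<subseteq> G \<and> prov (Imp (Conj xs) p)" using Th_finite Th_list_prov by blast
next
  assume "\<exists>xs. set xs \<subseteq> G \<and> prov (Imp (Conj xs) p)"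
  then obtain xs where "set xs \<subseteq> G" "prov (Imp (Conj xs) p)" by blast
  then show "Th G p" using Th_ax[OF _ Th_mono[OF Th_Conj_self]] by blast
qed

lemma derives_Th: "derives G D \<longleftrightarrow> (\<exists>ys. set ys \<subseteq> D \<and> Th G (Disj ys))"
  unfolding derives_def Th_iff by blast

lemma Th_orE: "Th G (Imp a c) \<Longrightarrow> Th G (Imp b c) \<Longrightarrow> Th G (Or a b) \<Longrightarrow> Th G c"
  using Th_mp[OF Th_mp[OF Th_mp[OF Th.thmI[OF prov.ax_orE]]]] by blast

lemma Th_compose: "Th G (Imp a b) \<Longrightarrow> Th G (Imp b c) \<Longrightarrow> Th G (Imp a c)"
proof -
  assume 1: "Th G (Imp a b)" and 2: "Th G (Imp b c)"
  have "Th (insert a G) c"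
    using Th_mp[OF Th_mono[OF 2] Th_mp[OF Th_mono[OF 1] Th.hyp]] by blast
  then show ?thesis by (rule Th_deduct)
qed

lemma Th_in_Disj: "y \<in> set zs \<Longrightarrow> Th G (Imp y (Disj zs))"
proof (induction zs)
  case Nil then show ?case by simp
next
  case (Cons z zs)
  then show ?case
  proof (cases "y = z")
    case True then show ?thesis by (simp add: Th.thmI prov.ax_or1)
  next
    case False then have "Th G (Imp y (Disj zs))" using Cons by auto
    then show ?thesis using Th_compose[OF _ Th.thmI[OF prov.ax_or2]] by simp
  qed
qed

lemma Th_Disj_sub: "set ys \<subseteq> set zs \<Longrightarrow> Th G (Imp (Disj ys) (Disj zs))"
proof (induction ys)
  case Nil then show ?case by (simp add: Th.thmI prov.ax_efq)
next
  case (Cons y ys)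
  then have 1: "Th G (Imp y (Disj zs))" "Th G (Imp (Disj ys) (Disj zs))" by (auto intro: Th_in_Disj)
  have "Th (insert (Or y (Disj ys)) G) (Disj zs)"
    by (rule Th_orE[of _ y _ "Disj ys"]) (auto intro: Th_mono[OF 1(1)] Th_mono[OF 1(2)] Th.hyp)
  then show ?case using Th_deduct by simp
qed

lemma Th_Disj_weak: "Th G (Disj ys) \<Longrightarrow> set ys \<subseteq> set zs \<Longrightarrow> Th G (Disj zs)"
  using Th_mp[OF Th_Disj_sub] by blast


lemma Th_hyp_in: "p \<in> G \<Longrightarrow> Th G p" by (rule Th.hyp)

lemma Th_single_Disj: "Th G p \<Longrightarrow> Th G (Disj [p])"
  using Th_ax[OF prov.ax_or1] by simp

lemma prime_derivesD: "prime_type F \<Longrightarrow> set ys \<subseteq> tminus F \<Longrightarrow> \<not> Th (tplus F) (Disj ys)"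
  unfolding prime_type_def derives_Th by blast

lemma prime_closed: assumes "prime_type F" "Th (tplus F) p" shows "p \<in> tplus F"
proof (rule ccontr)
  assume "p \<notin> tplus F"
  then have "p \<in> tminus F" using assms(1) unfolding prime_type_def by blast
  then show False using prime_derivesD[OF assms(1), of "[p]"] Th_single_Disj[OF assms(2)] by simp
qed

lemma prime_minus: assumes "prime_type F" shows "tminus F = - tplus F"
proof -
  have "p \<notin> tplus F" if "p \<in> tminus F" for p
  proof
    assume "p \<in> tplus F"
    then have "Th (tplus F) (Disj [p])" using Th_single_Disj Th.hyp by blast
    then show False using prime_derivesD[OF assms, of "[p]"] that by simp
  qed
  then show ?thesis using assms unfolding prime_type_def by blast
qed

lemma prime_or: assumes "prime_type F" "Th (tplus F) (Or p q)" shows "p \<in> tplus F \<or> q \<in> tplus F"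
proof (rule ccontr)
  assume "\<not> (p \<in> tplus F \<or> q \<in> tplus F)"
  then have "set [p,q] \<subseteq> tminus F" using prime_minus[OF assms(1)] by auto
  moreover have "Th (tplus F) (Disj [p,q])"
    by (rule Th_orE[OF Th_in_Disj Th_in_Disj assms(2)]) auto
  ultimately show False using prime_derivesD[OF assms(1)] by blast
qed

lemma prime_bot: "prime_type F \<Longrightarrow> Bot \<notin> tplus F"
  using prime_derivesD[of F "[]"] Th.hyp by fastforce

lemma prov_dia_unfold: "prov (Imp (Dia p) (Or p (Next (Dia p))))"
proof -
  let ?c = "Or p (Next (Dia p))"
  have a: "prov (Imp p (Dia p))"
  proof -
    have "Th {p} (Dia p)" using Th_ax[OF prov.ax_dia_fix Th_ax[OF prov.ax_or1 Th.hyp]] by blast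
    then show ?thesis using Th_deduct[of p "{}"] Th_empty by blast
  qed
  have b: "prov (Imp (Next (Dia p)) (Dia p))"
  proof -
    have "Th {Next (Dia p)} (Dia p)" using Th_ax[OF prov.ax_dia_fix Th_ax[OF prov.ax_or2 Th.hyp]] by blast
    then show ?thesis using Th_deduct[of "Next (Dia p)" "{}"] Th_empty by blast
  qed
  have c: "prov (Imp (Next ?c) ?c)"
  proof -
    let ?G = "{Next ?c}"
    have 1: "Th ?G (Or (Next p) (Next (Next (Dia p))))"
      using Th_ax[OF prov.ax_next_or Th.hyp] by blast
    have 2: "Th ?G (Imp (Next p) ?c)"
      using Th_compose[OF Th.thmI[OF prov.mp[OF prov.ax_next_imp prov.nec[OF a]]] Th.thmI[OF prov.ax_or2]] .
    have 3: "Th ?G (Imp (Next (Next (Dia p))) ?c)"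
      using Th_compose[OF Th.thmI[OF prov.mp[OF prov.ax_next_imp prov.nec[OF b]]] Th.thmI[OF prov.ax_or2]] .
    have "Th ?G ?c" by (rule Th_orE[OF 2 3 1])
    then show ?thesis using Th_deduct[of "Next ?c" "{}"] Th_empty by blast
  qed
  have d: "prov (Imp (Dia ?c) ?c)" by (rule prov.dia_ind[OF c])
  have e: "prov (Imp (Dia p) (Dia ?c))" by (rule prov.dia_mono[OF prov.ax_or1])
  show ?thesis using Th_compose[OF Th.thmI[OF e] Th.thmI[OF d], of "{}"] Th_empty by blast
qed

lemma prime_is_type: assumes "prime_type F" shows "is_type UNIV F"
proof -
  note m = prime_minus[OF assms]
  note cl = prime_closed[OF assms]
  have and1: "And p q \<in> tplus F \<longleftrightarrow> p \<in> tplus F \<and> q \<in> tplus F" for p q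
  proof
    assume h: "And p q \<in> tplus F"
    show "p \<in> tplus F \<and> q \<in> tplus F"
      using cl[OF Th_ax[OF prov.ax_and1 Th.hyp[OF h]]] cl[OF Th_ax[OF prov.ax_and2 Th.hyp[OF h]]] by blast
  next
    assume "p \<in> tplus F \<and> q \<in> tplus F"
    then show "And p q \<in> tplus F"
      using cl[OF Th_mp[OF Th_ax[OF prov.ax_andI Th.hyp] Th.hyp]] by blast
  qed
  have or1: "Or p q \<in> tplus F \<longleftrightarrow> p \<in> tplus F \<or> q \<in> tplus F" for p q
  proof
    assume h: "Or p q \<in> tplus F"
    show "p \<in> tplus F \<or> q \<in> tplus F" using prime_or[OF assms Th.hyp[OF h]] .
  next
    assume "p \<in> tplus F \<or> q \<in> tplus F"
    then show "Or p q \<in> tplus F"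
      using cl[OF Th_ax[OF prov.ax_or1 Th.hyp]] cl[OF Th_ax[OF prov.ax_or2 Th.hyp]] by blast
  qed
  have imp: "Imp p q \<in> tplus F \<longrightarrow> p \<in> tminus F \<or> q \<in> tplus F" for p q
    using cl[OF Th_mp[OF Th.hyp Th.hyp]] m by blast
  have dia: "Dia p \<in> tminus F \<longrightarrow> p \<in> tminus F" for p
  proof -
    have "p \<in> tplus F \<Longrightarrow> Dia p \<in> tplus F"
      using cl[OF Th_ax[OF prov.ax_dia_fix Th_ax[OF prov.ax_or1 Th.hyp]]] by blast
    then show ?thesis using m by blast
  qed
  show ?thesis unfolding is_type_def
    using m prime_bot[OF assms] and1 or1 imp dia by blast
qed


lemma lindenbaum:
  assumes nd: "\<not> derives G D"
  shows "\<exists>F. prime_type F \<and> G \<subseteq> tplus F \<and> D \<subseteq> tminus F"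
proof -
  define A where "A = {H. G \<subseteq> H \<and> \<not> derives H D}"
  have "\<forall>C\<in>chains A. \<exists>U\<in>A. \<forall>X\<in>C. X \<subseteq> U"
  proof
    fix C assume C: "C \<in> chains A"
    then have sc: "subset.chain A C" by (simp add: chains_alt_def)
    show "\<exists>U\<in>A. \<forall>X\<in>C. X \<subseteq> U"
    proof (cases "C = {}")
      case True
      then show ?thesis using nd unfolding A_def by blast
    next
      case False
      have CA: "C \<subseteq> A" using sc by (simp add: subset_chain_def)
      have "\<Union>C \<in> A"
        unfolding A_def
      proof (intro CollectI conjI)
        show "G \<subseteq> \<Union>C" using False CA unfolding A_def by blast
        show "\<not> derives (\<Union>C) D"
        proof
          assume "derives (\<Union>C) D"
          then obtain xs ys where xs: "set xs \<subseteq> \<Union>C" "set ys \<subseteq> D" "prov (Imp (Conj xs) (Disj ys))"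
            unfolding derives_def by blast
          obtain B where "B \<in> C" "set xs \<subseteq> B"
            using finite_subset_Union_chain[OF _ xs(1) False sc] by blast
          then have "derives B D" using xs unfolding derives_def by blast
          then show False using \<open>B \<in> C\<close> CA unfolding A_def by blast
        qed
      qed
      then show ?thesis by blast
    qed
  qed
  then obtain M where MA: "M \<in> A" and Mmax: "\<forall>X\<in>A. M \<subseteq> X \<longrightarrow> X = M"
    using Zorn_Lemma2[of A] by blast
  have claim: "set ys \<inter> M = {} \<Longrightarrow> \<exists>ds. set ds \<subseteq> D \<and> Th M (Imp (Disj ys) (Disj ds))" for ys
  proof (induction ys)
    case Nil
    show ?case by (rule exI[of _ "[]"]) (simp add: Th.thmI prov_I)
  next
    case (Cons y ys)
    then have yM: "y \<notin> M" by simp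
    then obtain d2 where d2: "set d2 \<subseteq> D" "Th M (Imp (Disj ys) (Disj d2))" using Cons by auto
    have "insert y M \<notin> A" using Mmax yM by blast
    then have "derives (insert y M) D" using MA unfolding A_def by blast
    then obtain d1 where d1: "set d1 \<subseteq> D" "Th (insert y M) (Disj d1)" unfolding derives_Th by blast
    have t1: "Th M (Imp y (Disj (d1@d2)))"
      using Th_compose[OF Th_deduct[OF d1(2)] Th_Disj_sub[of d1 "d1@d2"]] by simp
    have t2: "Th M (Imp (Disj ys) (Disj (d1@d2)))"
      using Th_compose[OF d2(2) Th_Disj_sub[of d2 "d1@d2"]] by simp
    have "Th (insert (Or y (Disj ys)) M) (Disj (d1@d2))"
      by (rule Th_orE[OF Th_mono[OF t1] Th_mono[OF t2] Th.hyp]) auto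
    then have "Th M (Imp (Disj (y#ys)) (Disj (d1@d2)))" using Th_deduct by simp
    then show ?case using d1(1) d2(1) by (intro exI[of _ "d1@d2"]) auto
  qed
  have MG: "G \<subseteq> M" and MD: "\<not> derives M D" using MA unfolding A_def by auto
  have pr: "prime_type (-M, M)"
    unfolding prime_type_def
  proof (simp, intro notI)
    assume "derives M (- M)"
    then obtain ys where ys: "set ys \<subseteq> -M" "Th M (Disj ys)" unfolding derives_Th by blast
    then obtain ds where "set ds \<subseteq> D" "Th M (Imp (Disj ys) (Disj ds))" using claim by blast
    then have "derives M D" using Th_mp[OF _ ys(2)] unfolding derives_Th by blast
    then show False using MD by simp
  qed
  have "D \<subseteq> -M"
  proof
    fix d assume "d \<in> D"
    show "d \<in> -M"
    proof
      assume "d \<in> M"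
      then have "Th M (Disj [d])" using Th_single_Disj Th.hyp by blast
      then show False using MD \<open>d \<in> D\<close> unfolding derives_Th by (metis empty_set empty_subsetI insert_subset list.simps(15))
    qed
  qed
  then show ?thesis using pr MG by (intro exI[of _ "(-M, M)"]) auto
qed

definition succ :: "ftype \<Rightarrow> ftype" where
  "succ F = ({p. Next p \<in> tminus F}, {p. Next p \<in> tplus F})"

lemma prov_next_conj: "prov (Imp (Conj (map Next xs)) (Next (Conj xs)))"
proof (induction xs)
  case Nil
  show ?case using prov.mp[OF prov.ax_k prov.nec[OF prov_Top]] by simp
next
  case (Cons x xs)
  let ?h = "And (Next x) (Conj (map Next xs))"
  have h: "Th {?h} ?h" by (rule Th.hyp) simp
  have 1: "Th {?h} (Next x)" using Th_ax[OF prov.ax_and1 h] .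
  have 2: "Th {?h} (Next (Conj xs))" using Th_ax[OF Cons Th_ax[OF prov.ax_and2 h]] .
  have "Th {?h} (Next (And x (Conj xs)))"
    using Th_ax[OF prov.ax_next_and Th_mp[OF Th_ax[OF prov.ax_andI 1] 2]] .
  then show ?case using Th_deduct[of ?h "{}"] Th_empty by simp
qed

lemma prov_next_disj: "prov (Imp (Next (Disj ys)) (Disj (map Next ys)))"
proof (induction ys)
  case Nil
  show ?case using prov.ax_nnext by simp
next
  case (Cons y ys)
  let ?h = "Next (Or y (Disj ys))"
  let ?c = "Or (Next y) (Disj (map Next ys))"
  have 1: "Th {?h} (Or (Next y) (Next (Disj ys)))" using Th_ax[OF prov.ax_next_or Th.hyp] by blast
  have 2: "Th {?h} (Imp (Next y) ?c)" by (rule Th.thmI[OF prov.ax_or1])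
  have 3: "Th {?h} (Imp (Next (Disj ys)) ?c)"
    by (rule Th_compose[OF Th.thmI[OF Cons] Th.thmI[OF prov.ax_or2]])
  have "Th {?h} ?c" by (rule Th_orE[OF 2 3 1])
  then show ?case using Th_deduct[of ?h "{}"] Th_empty by simp
qed

lemma prime_succ: assumes "prime_type F" shows "prime_type (succ F)"
proof -
  note m = prime_minus[OF assms]
  have "\<not> derives (tplus (succ F)) (tminus (succ F))"
  proof
    assume "derives (tplus (succ F)) (tminus (succ F))"
    then obtain xs ys where xs: "set xs \<subseteq> {p. Next p \<in> tplus F}" "set ys \<subseteq> {p. Next p \<in> tminus F}"
      "prov (Imp (Conj xs) (Disj ys))" unfolding derives_def succ_def by auto
    have n: "prov (Imp (Next (Conj xs)) (Next (Disj ys)))"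
      by (rule prov.mp[OF prov.ax_next_imp prov.nec[OF xs(3)]])
    have "Th {} (Imp (Conj (map Next xs)) (Disj (map Next ys)))"
      using Th_compose[OF Th_compose[OF Th.thmI[OF prov_next_conj] Th.thmI[OF n]] Th.thmI[OF prov_next_disj]] .
    then have "prov (Imp (Conj (map Next xs)) (Disj (map Next ys)))" by (rule Th_empty)
    moreover have "set (map Next xs) \<subseteq> tplus F" "set (map Next ys) \<subseteq> tminus F" using xs by auto
    ultimately have "derives (tplus F) (tminus F)" unfolding derives_def by blast
    then show False using assms unfolding prime_type_def by blast
  qed
  moreover have "tminus (succ F) \<union> tplus (succ F) = UNIV" using m unfolding succ_def by auto
  ultimately show ?thesis unfolding prime_type_def by blast
qed

lemma S_succ: assumes "prime_type F" shows "type_S F (succ F)"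
proof -
  note m = prime_minus[OF assms]
  note cl = prime_closed[OF assms]
  have 3: "Next (Dia p) \<in> tplus F" if "Dia p \<in> tplus F" "p \<in> tminus F" for p
    using prime_or[OF assms Th_ax[OF prov_dia_unfold Th.hyp[OF that(1)]]] that(2) m by blast
  have 4: "Next (Dia p) \<in> tminus F" if "Dia p \<in> tminus F" for p
  proof -
    have "Next (Dia p) \<in> tplus F \<Longrightarrow> Dia p \<in> tplus F"
      using cl[OF Th_ax[OF prov.ax_dia_fix Th_ax[OF prov.ax_or2 Th.hyp]]] by blast
    then show ?thesis using that m by blast
  qed
  show ?thesis unfolding type_S_def succ_def using 3 4 by auto
qed

lemma S_unique: assumes "prime_type F" "prime_type G" "type_S F G" shows "G = succ F"
proof -
  note mF = prime_minus[OF assms(1)] and mG = prime_minus[OF assms(2)]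
  have a: "Next p \<in> tplus F \<Longrightarrow> p \<in> tplus G" for p using assms(3) unfolding type_S_def by blast
  have b: "Next p \<in> tminus F \<Longrightarrow> p \<in> tminus G" for p using assms(3) unfolding type_S_def by blast
  have p: "tplus G = {p. Next p \<in> tplus F}"
  proof (intro set_eqI iffI)
    fix x assume "x \<in> tplus G"
    then have "x \<notin> tminus G" using mG by blast
    then have "Next x \<notin> tminus F" using b by blast
    then show "x \<in> {p. Next p \<in> tplus F}" using mF by blast
  qed (use a in blast)
  have q: "tminus G = {p. Next p \<in> tminus F}" using p mF mG by blast
  show ?thesis unfolding succ_def prod_eq_iff using p q by simp
qed

lemma imp_witness:
  assumes "prime_type F" "Imp p q \<in> tminus F"
  shows "\<exists>G. prime_type G \<and> type_le F G \<and> p \<in> tplus G \<and> q \<in> tminus G"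
proof -
  note m = prime_minus[OF assms(1)]
  have "\<not> derives (insert p (tplus F)) {q}"
  proof
    assume "derives (insert p (tplus F)) {q}"
    then obtain ys where ys: "set ys \<subseteq> {q}" "Th (insert p (tplus F)) (Disj ys)" unfolding derives_Th by blast
    have "Th (insert p (tplus F)) (Disj [q])" using Th_Disj_weak[OF ys(2), of "[q]"] ys(1) by simp
    moreover have "Th (insert p (tplus F)) (Imp (Disj [q]) q)"
    proof -
      have "Th {Or q Bot} q" by (rule Th_orE[OF Th.thmI[OF prov_I] Th.thmI[OF prov.ax_efq] Th.hyp]) simp
      then show ?thesis using Th_mono[OF Th_deduct[of "Or q Bot" "{}" q]] by simp
    qed
    ultimately have "Th (insert p (tplus F)) q" by (rule Th_mp[rotated])
    then have "Imp p q \<in> tplus F" using prime_closed[OF assms(1) Th_deduct] by blast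
    then show False using assms(2) m by blast
  qed
  then obtain G where "prime_type G" "insert p (tplus F) \<subseteq> tplus G" "{q} \<subseteq> tminus G"
    using lindenbaum by blast
  then show ?thesis unfolding type_le_def by blast
qed

theorem proposition4p4:
  shows "weak_quasimodel UNIV Wc le_c S_c l_c \<and> deterministic Wc S_c"
proof -
  have po: "partial_order_on' Wc le_c"
    unfolding partial_order_on'_def Wc_def le_c_def type_le_def
  proof (intro conjI ballI impI)
    fix u v assume u: "u \<in> {F. prime_type F}" and v: "v \<in> {F. prime_type F}"
      and "tplus u \<subseteq> tplus v" "tplus v \<subseteq> tplus u"
    then have "tplus u = tplus v" by blast
    moreover have "tminus u = tminus v" using prime_minus u v calculation by auto
    ultimately show "u = v" by (simp add: prod_eq_iff)
  qed auto
  have lf: "labelled_frame UNIV Wc le_c l_c"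
    unfolding labelled_frame_def
  proof (intro conjI ballI allI impI)
    show "partial_order_on' Wc le_c" by (rule po)
    fix w assume "w \<in> Wc"
    then have w: "prime_type w" unfolding Wc_def by simp
    show "is_type UNIV (l_c w)" unfolding l_c_def using prime_is_type[OF w] by simp
    { fix v assume "le_c w v" then show "type_le (l_c w) (l_c v)" unfolding le_c_def l_c_def by simp }
    { fix p q assume "Imp p q \<in> tminus (l_c w)"
      then obtain G where "prime_type G" "type_le w G" "p \<in> tplus G" "q \<in> tminus G"
        using imp_witness[OF w] unfolding l_c_def id_def by blast
      then show "\<exists>v\<in>Wc. le_c w v \<and> p \<in> tplus (l_c v) \<and> q \<in> tminus (l_c v)"
        unfolding Wc_def le_c_def l_c_def id_def by (intro bexI[of _ G]) auto }
  qed
  have det: "deterministic Wc S_c"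
    unfolding deterministic_def Wc_def S_c_def
  proof
    fix w assume "w \<in> {F. prime_type F}"
    then have w: "prime_type w" by simp
    show "\<exists>!v. v \<in> {F. prime_type F} \<and> type_S w v"
    proof (rule ex1I[of _ "succ w"])
      show "succ w \<in> {F. prime_type F} \<and> type_S w (succ w)" using prime_succ[OF w] S_succ[OF w] by simp
      fix v assume "v \<in> {F. prime_type F} \<and> type_S w v"
      then show "v = succ w" using S_unique[OF w] by simp
    qed
  qed
  have fc: "forward_confluent Wc le_c S_c"
    unfolding forward_confluent_def Wc_def S_c_def le_c_def
  proof (intro ballI impI)
    fix w w' v assume w: "w \<in> {F. prime_type F}" and w': "w' \<in> {F. prime_type F}"
      and v: "v \<in> {F. prime_type F}" and h: "type_le w w' \<and> type_S w v"
    then have "v = succ w" using S_unique[of w v] w v by simp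
    then have "type_le v (succ w')" using h unfolding type_le_def succ_def by auto
    then show "\<exists>v'\<in>{F. prime_type F}. type_le v v' \<and> type_S w' v'"
      using prime_succ[of w'] S_succ[of w'] w' by (intro bexI[of _ "succ w'"]) auto
  qed
  have sn: "sensible Wc S_c l_c" unfolding sensible_def S_c_def l_c_def by simp
  show ?thesis unfolding weak_quasimodel_def using lf fc sn det by blast
qed

end
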